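(* For every Eulerian poset $P$ of rank $n+1$, the polynomial $(1+q)^{\lceil n/2\rceil}$ divides $\Theta(\Psi(P))$ in $\mathbb{Z}[q]$.
   Context: A graded poset $P$ with minimum $\hat0$ and maximum $\hat1$ is Eulerian if every interval $[x,y]$ with $x<y$ has as many elements of even rank as of odd rank. For $P$ of rank $n+1$ with rank function $\rho$, the $\mathbf{a}\mathbf{b}$-index is $\Psi(P)=\sum_{S\subseteq\{1,\dots,n\}} f_S\, v_S$, where for $S=\{s_1<\cdots<s_k\}$, $f_S$ is the number of chains $\hat0<x_1<\cdots<x_k<\hat1$ with $\rho(x_i)=s_i$, and $v_S=v_1\cdots v_n$ with $v_i=\mathbf{b}$ if $i\in S$, $v_i=\mathbf{a}-\mathbf{b}$ otherwise ($\mathbf{a},\mathbf{b}$ non-commuting variables). The Major MacMahon map $\Theta:\mathbb{Z}\langle\mathbf{a},\mathbf{b}\rangle\to\mathbb{Z}[q]$ is linear with $\Theta(u_1\cdots u_n)=\prod_{i:\,u_i=\mathbf{b}}q^i$ on monomials. *)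

theory Defs
  imports "HOL-Computational_Algebra.Polynomial" Complex_Main
begin

definition lt_on :: "('a \<Rightarrow> 'a \<Rightarrow> bool) \<Rightarrow> 'a \<Rightarrow> 'a \<Rightarrow> bool" where
  "lt_on le x y \<longleftrightarrow> le x y \<and> x \<noteq> y"

definition covers_on :: "'a set \<Rightarrow> ('a \<Rightarrow> 'a \<Rightarrow> bool) \<Rightarrow> 'a \<Rightarrow> 'a \<Rightarrow> bool" where
  "covers_on P le x y \<longleftrightarrow> x \<in> P \<and> y \<in> P \<and> lt_on le x y \<and>
     \<not> (\<exists>z\<in>P. lt_on le x z \<and> lt_on le z y)"

definition graded_poset ::
  "'a set \<Rightarrow> ('a \<Rightarrow> 'a \<Rightarrow> bool) \<Rightarrow> 'a \<Rightarrow> 'a \<Rightarrow> ('a \<Rightarrow> nat) \<Rightarrow> bool" where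
  "graded_poset P le z0 z1 rk \<longleftrightarrow>
     finite P \<and>
     (\<forall>x\<in>P. le x x) \<and>
     (\<forall>x\<in>P. \<forall>y\<in>P. le x y \<and> le y x \<longrightarrow> x = y) \<and>
     (\<forall>x\<in>P. \<forall>y\<in>P. \<forall>z\<in>P. le x y \<and> le y z \<longrightarrow> le x z) \<and>
     z0 \<in> P \<and> z1 \<in> P \<and>
     (\<forall>x\<in>P. le z0 x \<and> le x z1) \<and>
     rk z0 = 0 \<and>
     (\<forall>x y. covers_on P le x y \<longrightarrow> rk y = rk x + 1)"

definition eulerian ::
  "'a set \<Rightarrow> ('a \<Rightarrow> 'a \<Rightarrow> bool) \<Rightarrow> 'a \<Rightarrow> 'a \<Rightarrow> ('a \<Rightarrow> nat) \<Rightarrow> bool" where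
  "eulerian P le z0 z1 rk \<longleftrightarrow>
     graded_poset P le z0 z1 rk \<and>
     (\<forall>x\<in>P. \<forall>y\<in>P. lt_on le x y \<longrightarrow>
        card {z\<in>P. le x z \<and> le z y \<and> even (rk z - rk x)} =
        card {z\<in>P. le x z \<and> le z y \<and> odd (rk z - rk x)})"

text \<open>Flag f-vector: f_S = number of chains z0 < x_1 < ... < x_k < z1 with
  rk x_i = s_i, i.e. chains C of elements strictly between z0 and z1 on which
  rk is a bijection onto S.\<close>

definition flag_f ::
  "'a set \<Rightarrow> ('a \<Rightarrow> 'a \<Rightarrow> bool) \<Rightarrow> 'a \<Rightarrow> 'a \<Rightarrow> ('a \<Rightarrow> nat) \<Rightarrow> nat set \<Rightarrow> nat" where
  "flag_f P le z0 z1 rk S = card {C. C \<subseteq> P - {z0, z1} \<and>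
       (\<forall>x\<in>C. \<forall>y\<in>C. le x y \<or> le y x) \<and> bij_betw rk C S}"

text \<open>An element of Z<a,b> is represented by its coefficient function on words;
  a word is a bool list, False standing for the letter a and True for b.\<close>

type_synonym ncpoly = "bool list \<Rightarrow> int"

definition nc_one :: ncpoly where
  "nc_one = (\<lambda>w. if w = [] then 1 else 0)"

definition nc_a :: ncpoly where
  "nc_a = (\<lambda>w. if w = [False] then 1 else 0)"

definition nc_b :: ncpoly where
  "nc_b = (\<lambda>w. if w = [True] then 1 else 0)"

definition nc_mult :: "ncpoly \<Rightarrow> ncpoly \<Rightarrow> ncpoly" where
  "nc_mult f g = (\<lambda>w. \<Sum>k\<le>length w. f (take k w) * g (drop k w))"

definition v_word :: "nat \<Rightarrow> nat set \<Rightarrow> ncpoly" where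
  "v_word n S = foldr nc_mult
      (map (\<lambda>i. if i \<in> S then nc_b else (\<lambda>w. nc_a w - nc_b w)) [1..<n+1]) nc_one"

definition ab_index ::
  "'a set \<Rightarrow> ('a \<Rightarrow> 'a \<Rightarrow> bool) \<Rightarrow> 'a \<Rightarrow> 'a \<Rightarrow> ('a \<Rightarrow> nat) \<Rightarrow> nat \<Rightarrow> ncpoly" where
  "ab_index P le z0 z1 rk n =
     (\<lambda>w. \<Sum>S\<in>Pow {1..n}. int (flag_f P le z0 z1 rk S) * v_word n S w)"

text \<open>Major MacMahon map: linear, sending u_1...u_m to the product of q^i over
  positions i (1-based) with u_i = b. Defined on finitely supported elements.\<close>

definition Theta :: "ncpoly \<Rightarrow> int poly" where
  "Theta F = (\<Sum>w\<in>{w. F w \<noteq> 0}.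
      smult (F w) (\<Prod>i\<in>{i. i < length w \<and> w ! i}. [:0, 1:] ^ (i + 1)))"

end

theory Submission
  imports Defs
begin

lemma ar1: "even (b::nat) \<Longrightarrow> a < b \<Longrightarrow> (Suc b + 1) div 2 - (a div 2 + 1) = Suc ((b + 1) div 2 - (a div 2 + 1))"
  by presburger
lemma ar2: "odd (b::nat) \<Longrightarrow> (Suc b + 1) div 2 - (a div 2 + 1) = (b + 1) div 2 - (a div 2 + 1)"
  by presburger
lemma ar3: "\<not> (a::nat) < b \<Longrightarrow> (Suc b + 1) div 2 - (a div 2 + 1) = 0"
  by presburger
lemma ar4: "\<not> even ((b::nat) - a) \<Longrightarrow> a < b \<Longrightarrow> b div 2 - (a + 1) div 2 = (b + 1) div 2 - (a div 2 + 1)"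
proof -
  assume h: "\<not> even (b - a)" "a < b"
  show ?thesis
  proof (cases "even a")
    case True
    then obtain k where a: "a = 2*k" by (auto elim: evenE)
    have "odd b" using h True by (simp add: even_diff_nat)
    then obtain m where b: "b = 2*m+1" by (auto elim: oddE)
    show ?thesis unfolding a b by simp
  next
    case False
    then obtain k where a: "a = 2*k+1" by (auto elim: oddE)
    have "even b" using h False by (simp add: even_diff_nat)
    then obtain m where b: "b = 2*m" by (auto elim: evenE)
    show ?thesis unfolding a b by simp
  qed
qed
lemma ar5: "(a::nat) < z \<Longrightarrow> z < b \<Longrightarrow> b div 2 - (a + 1) div 2 = (z div 2 - (a + 1) div 2)
        + (if odd z then 1 else 0) + (b div 2 - (z + 1) div 2)"
proof -
  assume h: "a < z" "z < b"
  have h1: "(a+1) div 2 \<le> z div 2" using div_le_mono[of "a+1" z 2] h by simp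
  have h2: "(z+1) div 2 \<le> b div 2" using div_le_mono[of "z+1" b 2] h by simp
  show ?thesis
  proof (cases "odd z")
    case True
    then obtain k where "z = 2*k+1" by (auto elim: oddE)
    then have e: "(z+1) div 2 = z div 2 + 1" by simp
    have i: "(if odd z then 1 else 0) = (1::nat)" using True by simp
    show ?thesis unfolding i using e h1 h2 by linarith
  next
    case False
    then obtain k where "z = 2*k" by (auto elim: evenE)
    then have e: "(z+1) div 2 = z div 2" by simp
    have i: "(if odd z then 1 else 0) = (0::nat)" using False by simp
    show ?thesis unfolding i using e h1 h2 by linarith
  qed
qed

locale gp =
  fixes P :: "'a set" and le :: "'a \<Rightarrow> 'a \<Rightarrow> bool" and rk :: "'a \<Rightarrow> nat"
  assumes finP: "finite P"
    and reflP: "x\<in>P \<Longrightarrow> le x x"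
    and antisym: "\<lbrakk>x\<in>P; y\<in>P; le x y; le y x\<rbrakk> \<Longrightarrow> x = y"
    and trans: "\<lbrakk>x\<in>P; y\<in>P; z\<in>P; le x y; le y z\<rbrakk> \<Longrightarrow> le x z"
    and mono: "\<lbrakk>x\<in>P; y\<in>P; lt_on le x y\<rbrakk> \<Longrightarrow> rk x < rk y"
begin

definition ivl where "ivl u v = {z\<in>P. lt_on le u z \<and> lt_on le z v}"
definition chs where "chs u v = {D. D \<subseteq> ivl u v \<and> (\<forall>x\<in>D. \<forall>y\<in>D. le x y \<or> le y x)}"

lemma lt_trans: "\<lbrakk>x\<in>P; y\<in>P; z\<in>P; lt_on le x y; lt_on le y z\<rbrakk> \<Longrightarrow> lt_on le x z"
  unfolding lt_on_def using trans antisym by blast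

lemma lt_le_trans: "\<lbrakk>x\<in>P; y\<in>P; z\<in>P; lt_on le x y; le y z\<rbrakk> \<Longrightarrow> lt_on le x z"
  unfolding lt_on_def using trans antisym by blast

lemma le_lt_trans: "\<lbrakk>x\<in>P; y\<in>P; z\<in>P; le x y; lt_on le y z\<rbrakk> \<Longrightarrow> lt_on le x z"
  unfolding lt_on_def using trans antisym by blast

lemma finite_ivl: "finite (ivl u v)"
  unfolding ivl_def using finP by simp

lemma finite_chs: "finite (chs u v)"
proof -
  have "chs u v \<subseteq> Pow (ivl u v)" unfolding chs_def by auto
  then show ?thesis using finite_ivl by (meson finite_Pow_iff finite_subset)
qed

lemma ivl_P: "ivl u v \<subseteq> P" unfolding ivl_def by auto

lemma chs_empty: "{} \<in> chs u v" unfolding chs_def by auto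

lemma chs_first:
  assumes u: "u \<in> P" and v: "v \<in> P"
  shows "(\<Sum>D\<in>chs u v. F D) = F {} + (\<Sum>z\<in>ivl u v. \<Sum>D\<in>chs z v. F (insert z D))"
proof -
  let ?S = "Sigma (ivl u v) (\<lambda>z. chs z v)"
  let ?h = "\<lambda>p. insert (fst p) (snd p)"
  have inj: "inj_on ?h ?S"
  proof (rule inj_onI)
    fix p1 p2 assume p1: "p1 \<in> ?S" and p2: "p2 \<in> ?S" and eq: "?h p1 = ?h p2"
    obtain z1 D1 where pp1: "p1 = (z1, D1)" by (cases p1)
    obtain z2 D2 where pp2: "p2 = (z2, D2)" by (cases p2)
    have z1: "z1 \<in> ivl u v" "D1 \<subseteq> ivl z1 v" using p1 pp1 unfolding chs_def by auto
    have z2: "z2 \<in> ivl u v" "D2 \<subseteq> ivl z2 v" using p2 pp2 unfolding chs_def by auto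
    have e: "insert z1 D1 = insert z2 D2" using eq pp1 pp2 by simp
    have n1: "z1 \<notin> D1" using z1 unfolding ivl_def lt_on_def by auto
    have n2: "z2 \<notin> D2" using z2 unfolding ivl_def lt_on_def by auto
    have "z1 = z2"
    proof (rule ccontr)
      assume ne: "z1 \<noteq> z2"
      have "z2 \<in> insert z1 D1" using e by simp
      hence "z2 \<in> D1" using ne by simp
      hence a: "le z1 z2" using z1 unfolding ivl_def lt_on_def by auto
      have "z1 \<in> insert z2 D2" using e[symmetric] by simp
      hence "z1 \<in> D2" using ne by simp
      hence b: "le z2 z1" using z2 unfolding ivl_def lt_on_def by auto
      show False using antisym[OF _ _ a b] ne z1 z2 ivl_P by blast
    qed
    moreover have "D1 = D2" using e n1 n2 \<open>z1 = z2\<close>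
      by (metis insert_ident)
    ultimately show "p1 = p2" using pp1 pp2 by simp
  qed
  have img: "?h ` ?S = chs u v - {{}}"
  proof
    show "?h ` ?S \<subseteq> chs u v - {{}}"
    proof
      fix D assume "D \<in> ?h ` ?S"
      then obtain z D' where zz: "z \<in> ivl u v" "D' \<in> chs z v" and D: "D = insert z D'" by auto
      have sub: "D' \<subseteq> ivl u v"
      proof
        fix w assume "w \<in> D'"
        then have w: "w \<in> ivl z v" using zz unfolding chs_def by auto
        then show "w \<in> ivl u v" using zz lt_trans[of u z w] u unfolding ivl_def by auto
      qed
      have "\<forall>x\<in>D. \<forall>y\<in>D. le x y \<or> le y x"
        using zz reflP[of z] ivl_P unfolding D chs_def ivl_def lt_on_def by auto
      then show "D \<in> chs u v - {{}}" using zz sub D unfolding chs_def by auto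
    qed
  next
    show "chs u v - {{}} \<subseteq> ?h ` ?S"
    proof
      fix D assume D: "D \<in> chs u v - {{}}"
      have fD: "finite D" using D finite_ivl unfolding chs_def by (auto intro: finite_subset)
      have ne: "D \<noteq> {}" using D by auto
      define z where "z = (ARG_MIN rk x. x \<in> D)"
      have "\<exists>x. x \<in> D" using ne by auto
      obtain x0 where x0: "x0 \<in> D \<and> (\<forall>y\<in>D. rk x0 \<le> rk y)"
      proof -
        have "Min (rk ` D) \<in> rk ` D" using fD ne by (intro Min_in) auto
        then obtain x0 where "x0 \<in> D" "rk x0 = Min (rk ` D)" by auto
        moreover have "\<forall>y\<in>D. rk x0 \<le> rk y" using fD \<open>rk x0 = Min (rk ` D)\<close> by (auto intro: Min_le)
        ultimately show ?thesis using that by blast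
      qed
      have DP: "D \<subseteq> P" "D \<subseteq> ivl u v" using D ivl_P unfolding chs_def by auto
      have x0min: "\<forall>y\<in>D. y \<noteq> x0 \<longrightarrow> lt_on le x0 y"
      proof (intro ballI impI)
        fix y assume y: "y \<in> D" "y \<noteq> x0"
        have "le x0 y \<or> le y x0" using D x0 y unfolding chs_def by auto
        moreover have "\<not> lt_on le y x0"
          using mono[of y x0] x0 y DP by force
        ultimately show "lt_on le x0 y" using y unfolding lt_on_def by auto
      qed
      have D': "D - {x0} \<in> chs x0 v"
        using D DP x0min unfolding chs_def ivl_def by auto
      have "D = ?h (x0, D - {x0})" using x0 by auto
      moreover have "(x0, D - {x0}) \<in> ?S" using D' x0 DP by auto
      ultimately show "D \<in> ?h ` ?S" by blast
    qed
  qed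
  have "(\<Sum>z\<in>ivl u v. \<Sum>D\<in>chs z v. F (insert z D)) = (\<Sum>p\<in>?S. F (?h p))"
    by (subst sum.Sigma) (auto simp: finite_ivl finite_chs split_def)
  also have "\<dots> = (\<Sum>D\<in>?h ` ?S. F D)" using sum.reindex[OF inj, of F] by (simp add: comp_def)
  also have "\<dots> = (\<Sum>D\<in>chs u v - {{}}. F D)" using img by simp
  finally have 1: "(\<Sum>z\<in>ivl u v. \<Sum>D\<in>chs z v. F (insert z D)) = (\<Sum>D\<in>chs u v - {{}}. F D)" .
  have "(\<Sum>D\<in>chs u v. F D) = F {} + (\<Sum>D\<in>chs u v - {{}}. F D)"
    using chs_empty finite_chs by (metis sum.remove)
  then show ?thesis using 1 by simp
qed

end

context gp begin
lemma chs_last: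
  assumes u: "u \<in> P" and v: "v \<in> P"
  shows "(\<Sum>D\<in>chs u v. F D) = F {} + (\<Sum>z\<in>ivl u v. \<Sum>D\<in>chs u z. F (insert z D))"
proof -
  let ?S = "Sigma (ivl u v) (\<lambda>z. chs u z)"
  let ?h = "\<lambda>p. insert (fst p) (snd p)"
  have inj: "inj_on ?h ?S"
  proof (rule inj_onI)
    fix p1 p2 assume p1: "p1 \<in> ?S" and p2: "p2 \<in> ?S" and eq: "?h p1 = ?h p2"
    obtain z1 D1 where pp1: "p1 = (z1, D1)" by (cases p1)
    obtain z2 D2 where pp2: "p2 = (z2, D2)" by (cases p2)
    have z1: "z1 \<in> ivl u v" "D1 \<subseteq> ivl u z1" using p1 pp1 unfolding chs_def by auto
    have z2: "z2 \<in> ivl u v" "D2 \<subseteq> ivl u z2" using p2 pp2 unfolding chs_def by auto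
    have e: "insert z1 D1 = insert z2 D2" using eq pp1 pp2 by simp
    have n1: "z1 \<notin> D1" using z1 unfolding ivl_def lt_on_def by auto
    have n2: "z2 \<notin> D2" using z2 unfolding ivl_def lt_on_def by auto
    have "z1 = z2"
    proof (rule ccontr)
      assume ne: "z1 \<noteq> z2"
      have "z2 \<in> insert z1 D1" using e by simp
      hence "z2 \<in> D1" using ne by simp
      hence a: "le z2 z1" using z1 unfolding ivl_def lt_on_def by auto
      have "z1 \<in> insert z2 D2" using e[symmetric] by simp
      hence "z1 \<in> D2" using ne by simp
      hence b: "le z1 z2" using z2 unfolding ivl_def lt_on_def by auto
      show False using antisym[OF _ _ a b] ne z1 z2 ivl_P by blast
    qed
    moreover have "D1 = D2" using e n1 n2 \<open>z1 = z2\<close>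
      by (metis insert_ident)
    ultimately show "p1 = p2" using pp1 pp2 by simp
  qed
  have img: "?h ` ?S = chs u v - {{}}"
  proof
    show "?h ` ?S \<subseteq> chs u v - {{}}"
    proof
      fix D assume "D \<in> ?h ` ?S"
      then obtain z D' where zz: "z \<in> ivl u v" "D' \<in> chs u z" and D: "D = insert z D'" by auto
      have sub: "D' \<subseteq> ivl u v"
      proof
        fix w assume "w \<in> D'"
        then have w: "w \<in> ivl u z" using zz unfolding chs_def by auto
        then show "w \<in> ivl u v" using zz lt_trans[of w z v] v unfolding ivl_def by auto
      qed
      have "\<forall>x\<in>D. \<forall>y\<in>D. le x y \<or> le y x"
        using zz reflP[of z] ivl_P unfolding D chs_def ivl_def lt_on_def by auto
      then show "D \<in> chs u v - {{}}" using zz sub D unfolding chs_def by auto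
    qed
  next
    show "chs u v - {{}} \<subseteq> ?h ` ?S"
    proof
      fix D assume D: "D \<in> chs u v - {{}}"
      have fD: "finite D" using D finite_ivl unfolding chs_def by (auto intro: finite_subset)
      have ne: "D \<noteq> {}" using D by auto
      obtain x0 where x0: "x0 \<in> D \<and> (\<forall>y\<in>D. rk y \<le> rk x0)"
      proof -
        have "Max (rk ` D) \<in> rk ` D" using fD ne by (intro Max_in) auto
        then obtain x0 where "x0 \<in> D" "rk x0 = Max (rk ` D)" by auto
        moreover have "\<forall>y\<in>D. rk y \<le> rk x0" using fD \<open>rk x0 = Max (rk ` D)\<close> by (auto intro: Max_ge)
        ultimately show ?thesis using that by blast
      qed
      have DP: "D \<subseteq> P" "D \<subseteq> ivl u v" using D ivl_P unfolding chs_def by auto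
      have x0max: "\<forall>y\<in>D. y \<noteq> x0 \<longrightarrow> lt_on le y x0"
      proof (intro ballI impI)
        fix y assume y: "y \<in> D" "y \<noteq> x0"
        have "le x0 y \<or> le y x0" using D x0 y unfolding chs_def by auto
        moreover have "\<not> lt_on le x0 y"
          using mono[of x0 y] x0 y DP by force
        ultimately show "lt_on le y x0" using y unfolding lt_on_def by auto
      qed
      have D': "D - {x0} \<in> chs u x0"
        using D DP x0max unfolding chs_def ivl_def by auto
      have "D = ?h (x0, D - {x0})" using x0 by auto
      moreover have "(x0, D - {x0}) \<in> ?S" using D' x0 DP by auto
      ultimately show "D \<in> ?h ` ?S" by blast
    qed
  qed
  have "(\<Sum>z\<in>ivl u v. \<Sum>D\<in>chs u z. F (insert z D)) = (\<Sum>p\<in>?S. F (?h p))"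
    by (subst sum.Sigma) (auto simp: finite_ivl finite_chs split_def)
  also have "\<dots> = (\<Sum>D\<in>?h ` ?S. F D)" using sum.reindex[OF inj, of F] by (simp add: comp_def)
  also have "\<dots> = (\<Sum>D\<in>chs u v - {{}}. F D)" using img by simp
  finally have 1: "(\<Sum>z\<in>ivl u v. \<Sum>D\<in>chs u z. F (insert z D)) = (\<Sum>D\<in>chs u v - {{}}. F D)" .
  have "(\<Sum>D\<in>chs u v. F D) = F {} + (\<Sum>D\<in>chs u v - {{}}. F D)"
    using chs_empty finite_chs by (metis sum.remove)
  then show ?thesis using 1 by simp
qed

definition wt :: "(nat \<Rightarrow> 'r::comm_ring_1) \<Rightarrow> (nat \<Rightarrow> 'r) \<Rightarrow> 'a \<Rightarrow> 'a \<Rightarrow> 'a set \<Rightarrow> 'r" where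
  "wt \<alpha> \<beta> u v D = (\<Prod>i\<in>{rk u<..<rk v}. if i \<in> rk ` D then \<alpha> i else \<beta> i)"

definition CS :: "(nat \<Rightarrow> 'r::comm_ring_1) \<Rightarrow> (nat \<Rightarrow> 'r) \<Rightarrow> 'a \<Rightarrow> 'a \<Rightarrow> 'r" where
  "CS \<alpha> \<beta> u v = (\<Sum>D\<in>chs u v. wt \<alpha> \<beta> u v D)"

lemma ivl_split3:
  assumes "(a::nat) < b" "b < c"
  shows "{a<..<c} = {a<..<b} \<union> ({b} \<union> {b<..<c})"
  using assms by auto

lemma prod_split3:
  assumes "(a::nat) < b" "b < c"
  shows "(\<Prod>i\<in>{a<..<c}. f i) = (\<Prod>i\<in>{a<..<b}. f i) * f b * (\<Prod>i\<in>{b<..<c}. f i)"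
proof -
  have "(\<Prod>i\<in>{a<..<c}. f i) = (\<Prod>i\<in>{a<..<b}. f i) * (\<Prod>i\<in>{b} \<union> {b<..<c}. f i)"
    by (subst ivl_split3[OF assms], rule prod.union_disjoint) auto
  also have "(\<Prod>i\<in>{b} \<union> {b<..<c}. f i) = f b * (\<Prod>i\<in>{b<..<c}. f i)"
    by (subst prod.union_disjoint) auto
  finally show ?thesis by (simp add: mult.assoc)
qed

lemma ivl_rk:
  assumes "z \<in> ivl u v" "u \<in> P" "v \<in> P"
  shows "rk u < rk z" "rk z < rk v"
  using assms mono unfolding ivl_def by auto

lemma wt_first:
  assumes u: "u \<in> P" and v: "v \<in> P" and z: "z \<in> ivl u v" and D: "D \<in> chs z v"
  shows "wt \<alpha> \<beta> u v (insert z D) = (\<Prod>i\<in>{rk u<..<rk z}. \<beta> i) * \<alpha> (rk z) * wt \<alpha> \<beta> z v D"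
proof -
  have zP: "z \<in> P" using z ivl_P by auto
  have r: "rk u < rk z" "rk z < rk v" using ivl_rk[OF z u v] by auto
  have Dr: "\<And>w. w \<in> D \<Longrightarrow> rk z < rk w \<and> rk w < rk v"
    using D ivl_rk[OF _ zP v] unfolding chs_def by auto
  have "wt \<alpha> \<beta> u v (insert z D) = (\<Prod>i\<in>{rk u<..<rk z}. if i \<in> rk ` insert z D then \<alpha> i else \<beta> i)
      * (if rk z \<in> rk ` insert z D then \<alpha> (rk z) else \<beta> (rk z))
      * (\<Prod>i\<in>{rk z<..<rk v}. if i \<in> rk ` insert z D then \<alpha> i else \<beta> i)"
    unfolding wt_def by (rule prod_split3[OF r])
  also have "(\<Prod>i\<in>{rk u<..<rk z}. if i \<in> rk ` insert z D then \<alpha> i else \<beta> i) = (\<Prod>i\<in>{rk u<..<rk z}. \<beta> i)"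
  proof (rule prod.cong[OF refl])
    fix i assume i: "i \<in> {rk u<..<rk z}"
    have "i \<notin> rk ` insert z D" using i Dr by fastforce
    then show "(if i \<in> rk ` insert z D then \<alpha> i else \<beta> i) = \<beta> i" by simp
  qed
  also have "(\<Prod>i\<in>{rk z<..<rk v}. if i \<in> rk ` insert z D then \<alpha> i else \<beta> i) = wt \<alpha> \<beta> z v D"
    unfolding wt_def
  proof (rule prod.cong[OF refl])
    fix i assume i: "i \<in> {rk z<..<rk v}"
    have "i \<in> rk ` insert z D \<longleftrightarrow> i \<in> rk ` D" using i by auto
    then show "(if i \<in> rk ` insert z D then \<alpha> i else \<beta> i) = (if i \<in> rk ` D then \<alpha> i else \<beta> i)" by simp
  qed
  finally show ?thesis by simp
qed

lemma wt_last:
  assumes u: "u \<in> P" and v: "v \<in> P" and z: "z \<in> ivl u v" and D: "D \<in> chs u z"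
  shows "wt \<alpha> \<beta> u v (insert z D) = wt \<alpha> \<beta> u z D * \<alpha> (rk z) * (\<Prod>i\<in>{rk z<..<rk v}. \<beta> i)"
proof -
  have zP: "z \<in> P" using z ivl_P by auto
  have r: "rk u < rk z" "rk z < rk v" using ivl_rk[OF z u v] by auto
  have Dr: "\<And>w. w \<in> D \<Longrightarrow> rk u < rk w \<and> rk w < rk z"
    using D ivl_rk[OF _ u zP] unfolding chs_def by auto
  have "wt \<alpha> \<beta> u v (insert z D) = (\<Prod>i\<in>{rk u<..<rk z}. if i \<in> rk ` insert z D then \<alpha> i else \<beta> i)
      * (if rk z \<in> rk ` insert z D then \<alpha> (rk z) else \<beta> (rk z))
      * (\<Prod>i\<in>{rk z<..<rk v}. if i \<in> rk ` insert z D then \<alpha> i else \<beta> i)"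
    unfolding wt_def by (rule prod_split3[OF r])
  also have "(\<Prod>i\<in>{rk z<..<rk v}. if i \<in> rk ` insert z D then \<alpha> i else \<beta> i) = (\<Prod>i\<in>{rk z<..<rk v}. \<beta> i)"
  proof (rule prod.cong[OF refl])
    fix i assume i: "i \<in> {rk z<..<rk v}"
    have "i \<notin> rk ` insert z D" using i Dr by fastforce
    then show "(if i \<in> rk ` insert z D then \<alpha> i else \<beta> i) = \<beta> i" by simp
  qed
  also have "(\<Prod>i\<in>{rk u<..<rk z}. if i \<in> rk ` insert z D then \<alpha> i else \<beta> i) = wt \<alpha> \<beta> u z D"
    unfolding wt_def
  proof (rule prod.cong[OF refl])
    fix i assume i: "i \<in> {rk u<..<rk z}"
    have "i \<in> rk ` insert z D \<longleftrightarrow> i \<in> rk ` D" using i by auto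
    then show "(if i \<in> rk ` insert z D then \<alpha> i else \<beta> i) = (if i \<in> rk ` D then \<alpha> i else \<beta> i)" by simp
  qed
  finally show ?thesis by simp
qed

lemma CS_first:
  assumes u: "u \<in> P" and v: "v \<in> P"
  shows "CS \<alpha> \<beta> u v = (\<Prod>i\<in>{rk u<..<rk v}. \<beta> i)
     + (\<Sum>z\<in>ivl u v. (\<Prod>i\<in>{rk u<..<rk z}. \<beta> i) * \<alpha> (rk z) * CS \<alpha> \<beta> z v)"
proof -
  have "CS \<alpha> \<beta> u v = wt \<alpha> \<beta> u v {} + (\<Sum>z\<in>ivl u v. \<Sum>D\<in>chs z v. wt \<alpha> \<beta> u v (insert z D))"
    unfolding CS_def by (rule chs_first[OF u v])
  also have "wt \<alpha> \<beta> u v {} = (\<Prod>i\<in>{rk u<..<rk v}. \<beta> i)" unfolding wt_def by simp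
  also have "(\<Sum>z\<in>ivl u v. \<Sum>D\<in>chs z v. wt \<alpha> \<beta> u v (insert z D))
     = (\<Sum>z\<in>ivl u v. (\<Prod>i\<in>{rk u<..<rk z}. \<beta> i) * \<alpha> (rk z) * CS \<alpha> \<beta> z v)"
    unfolding CS_def sum_distrib_left
    by (rule sum.cong[OF refl], rule sum.cong[OF refl], rule wt_first[OF u v]) auto
  finally show ?thesis .
qed

lemma CS_last:
  assumes u: "u \<in> P" and v: "v \<in> P"
  shows "CS \<alpha> \<beta> u v = (\<Prod>i\<in>{rk u<..<rk v}. \<beta> i)
     + (\<Sum>z\<in>ivl u v. CS \<alpha> \<beta> u z * \<alpha> (rk z) * (\<Prod>i\<in>{rk z<..<rk v}. \<beta> i))"
proof -
  have "CS \<alpha> \<beta> u v = wt \<alpha> \<beta> u v {} + (\<Sum>z\<in>ivl u v. \<Sum>D\<in>chs u z. wt \<alpha> \<beta> u v (insert z D))"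
    unfolding CS_def by (rule chs_last[OF u v])
  also have "wt \<alpha> \<beta> u v {} = (\<Prod>i\<in>{rk u<..<rk v}. \<beta> i)" unfolding wt_def by simp
  also have "(\<Sum>z\<in>ivl u v. \<Sum>D\<in>chs u z. wt \<alpha> \<beta> u v (insert z D))
     = (\<Sum>z\<in>ivl u v. CS \<alpha> \<beta> u z * \<alpha> (rk z) * (\<Prod>i\<in>{rk z<..<rk v}. \<beta> i))"
    unfolding CS_def sum_distrib_right
    by (rule sum.cong[OF refl], rule sum.cong[OF refl], rule wt_last[OF u v]) auto
  finally show ?thesis .
qed

lemma CS_scale:
  "CS (\<lambda>i. f i * \<alpha> i) (\<lambda>i. f i * \<beta> i) u v = (\<Prod>i\<in>{rk u<..<rk v}. f i) * CS \<alpha> \<beta> u v"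
  unfolding CS_def wt_def sum_distrib_left
  by (rule sum.cong[OF refl]) (simp add: prod.distrib[symmetric] if_distrib)

end

context gp begin

definition star :: "('a \<Rightarrow> 'r::comm_ring_1) \<Rightarrow> ('a\<Rightarrow>'a\<Rightarrow>'r) \<Rightarrow> ('a\<Rightarrow>'a\<Rightarrow>'r) \<Rightarrow> 'a \<Rightarrow> 'a \<Rightarrow> 'r" where
  "star m A B u v = (\<Sum>z\<in>ivl u v. A u z * m z * B z v)"

lemma ivl_sub_left:
  assumes "u \<in> P" "v \<in> P" "w \<in> ivl u v"
  shows "ivl u w = {z\<in>ivl u v. lt_on le z w}"
  using assms lt_trans unfolding ivl_def by blast

lemma ivl_sub_right:
  assumes "u \<in> P" "v \<in> P" "z \<in> ivl u v"
  shows "ivl z v = {w\<in>ivl u v. lt_on le z w}"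
  using assms lt_trans unfolding ivl_def by blast

lemma star_assoc:
  assumes u: "u \<in> P" and v: "v \<in> P"
  shows "star n (\<lambda>x y. star m A B x y) C u v = star m A (\<lambda>x y. star n B C x y) u v"
proof -
  have "star n (\<lambda>x y. star m A B x y) C u v
      = (\<Sum>w\<in>ivl u v. \<Sum>z\<in>{z\<in>ivl u v. lt_on le z w}. A u z * m z * B z w * n w * C w v)"
    unfolding star_def sum_distrib_right
    by (rule sum.cong[OF refl]) (simp add: ivl_sub_left[OF u v] mult.assoc)
  also have "\<dots> = (\<Sum>z\<in>ivl u v. \<Sum>w\<in>{w\<in>ivl u v. lt_on le z w}. A u z * m z * B z w * n w * C w v)"
    by (rule sum.swap_restrict) (auto simp: finite_ivl)
  also have "\<dots> = star m A (\<lambda>x y. star n B C x y) u v"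
    unfolding star_def sum_distrib_left
    by (rule sum.cong[OF refl]) (simp add: ivl_sub_right[OF u v] mult.assoc)
  finally show ?thesis .
qed

lemma star_cong:
  assumes "\<And>z. z \<in> ivl u v \<Longrightarrow> A u z = A' u z" "\<And>z. z \<in> ivl u v \<Longrightarrow> B z v = B' z v"
  shows "star m A B u v = star m A' B' u v"
  unfolding star_def using assms by (intro sum.cong) auto

lemma star_diff_left:
  "star m (\<lambda>x y. A x y - B x y) C u v = star m A C u v - star m B C u v"
  unfolding star_def by (simp add: sum_subtractf algebra_simps)

lemma star_add_right:
  "star m A (\<lambda>x y. B x y + C x y) u v = star m A B u v + star m A C u v"
  unfolding star_def by (simp add: sum.distrib algebra_simps)

lemma star_add_mult:
  "star (\<lambda>z. m1 z + m2 z) A B u v = star m1 A B u v + star m2 A B u v"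
  unfolding star_def by (simp add: sum.distrib algebra_simps)

lemma star_unique:
  assumes h1: "\<And>u v. u \<in> P \<Longrightarrow> v \<in> P \<Longrightarrow> lt_on le u v \<Longrightarrow> Y1 u v = F u v + star m Pg Y1 u v"
    and h2: "\<And>u v. u \<in> P \<Longrightarrow> v \<in> P \<Longrightarrow> lt_on le u v \<Longrightarrow> Y2 u v = F u v + star m Pg Y2 u v"
  shows "u \<in> P \<Longrightarrow> v \<in> P \<Longrightarrow> lt_on le u v \<Longrightarrow> Y1 u v = Y2 u v"
proof (induction "rk v - rk u" arbitrary: u rule: less_induct)
  case less
  have "star m Pg Y1 u v = star m Pg Y2 u v"
  proof (rule star_cong)
    fix z assume z: "z \<in> ivl u v"
    have r: "rk u < rk z" "rk z < rk v" using ivl_rk[OF z less.prems(1,2)] by auto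
    show "Y1 z v = Y2 z v"
      using less.hyps[of z] r z less.prems unfolding ivl_def by auto
  qed simp
  then show ?case using h1[OF less.prems] h2[OF less.prems] by simp
qed

lemma cd_identity:
  assumes hPhi: "\<And>u v. u \<in> P \<Longrightarrow> v \<in> P \<Longrightarrow> lt_on le u v \<Longrightarrow>
        Phi u v = Pg u v + star (\<lambda>z. mg z + me z) Pg Phi u v"
    and hE: "\<And>u v. u \<in> P \<Longrightarrow> v \<in> P \<Longrightarrow> lt_on le u v \<Longrightarrow>
        E u v = Pg u v + star me Pg E u v"
  shows "u \<in> P \<Longrightarrow> v \<in> P \<Longrightarrow> lt_on le u v \<Longrightarrow> Phi u v = E u v + star mg E Phi u v"
proof -
  define X where "X = (\<lambda>u v. E u v + star mg E Phi u v)"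
  define F where "F = (\<lambda>u v. Pg u v + star mg Pg Phi u v)"
  have 1: "Phi u v = F u v + star me Pg Phi u v" if "u \<in> P" "v \<in> P" "lt_on le u v" for u v
    using hPhi[OF that] unfolding F_def star_add_mult by simp
  have 2: "X u v = F u v + star me Pg X u v" if u: "u \<in> P" and v: "v \<in> P" and "lt_on le u v" for u v
  proof -
    have "star me Pg X u v = star me Pg E u v + star me Pg (\<lambda>x y. star mg E Phi x y) u v"
      unfolding X_def by (rule star_add_right)
    also have "star me Pg (\<lambda>x y. star mg E Phi x y) u v = star mg (\<lambda>x y. star me Pg E x y) Phi u v"
      by (rule star_assoc[OF u v, symmetric])
    also have "\<dots> = star mg (\<lambda>x y. E x y - Pg x y) Phi u v"
    proof (rule star_cong)
      fix z assume z: "z \<in> ivl u v"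
      then have "z \<in> P" "lt_on le u z" unfolding ivl_def by auto
      then show "star me Pg E u z = E u z - Pg u z" using hE[OF u] by simp
    qed simp
    also have "\<dots> = star mg E Phi u v - star mg Pg Phi u v" by (rule star_diff_left)
    finally have "star me Pg X u v = star me Pg E u v + (star mg E Phi u v - star mg Pg Phi u v)" .
    moreover have "star me Pg E u v = E u v - Pg u v" using hE[OF that] by simp
    ultimately show ?thesis unfolding X_def F_def by simp
  qed
  show "u \<in> P \<Longrightarrow> v \<in> P \<Longrightarrow> lt_on le u v \<Longrightarrow> Phi u v = E u v + star mg E Phi u v"
    using star_unique[of Phi F me Pg X, OF 1 2] unfolding X_def by blast
qed

end

locale gpe = gp +
  assumes eul: "\<lbrakk>u\<in>P; v\<in>P; lt_on le u v\<rbrakk> \<Longrightarrow>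
     card {z\<in>P. le u z \<and> le z v \<and> even (rk z - rk u)} = card {z\<in>P. le u z \<and> le z v \<and> odd (rk z - rk u)}"
begin

definition R :: "'a \<Rightarrow> 'a \<Rightarrow> 'r::comm_ring_1" where "R u v = CS (\<lambda>_. -1) (\<lambda>_. 2) u v"

lemma R_first:
  assumes "u \<in> P" "v \<in> P"
  shows "(R u v :: 'r::comm_ring_1) = 2^(rk v - Suc (rk u)) + (\<Sum>z\<in>ivl u v. 2^(rk z - Suc (rk u)) * (-1) * R z v)"
  unfolding R_def by (subst CS_first[OF assms]) (simp add: prod_constant)

lemma R_last:
  assumes "u \<in> P" "v \<in> P"
  shows "(R u v :: 'r::comm_ring_1) = 2^(rk v - Suc (rk u)) + (\<Sum>z\<in>ivl u v. R u z * (-1) * 2^(rk v - Suc (rk z)))"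
  unfolding R_def by (subst CS_last[OF assms]) (simp add: prod_constant)

lemma ivl_facts:
  assumes "y \<in> ivl u v" "u \<in> P" "v \<in> P"
  shows "y \<in> P" "lt_on le u y" "lt_on le y v" "rk u < rk y" "rk y < rk v"
  using assms ivl_rk[OF assms] unfolding ivl_def by auto

lemma R_zero:
  "u \<in> P \<Longrightarrow> v \<in> P \<Longrightarrow> lt_on le u v \<Longrightarrow> even (rk v - rk u) \<Longrightarrow> (R u v :: 'r::comm_ring_1) = 0"
proof (induction "rk v - rk u" arbitrary: u v rule: less_induct)
  case less
  note u = less.prems(1) and v = less.prems(2) and uv = less.prems(3) and ev = less.prems(4)
  have IH: "\<And>u' v'. rk v' - rk u' < rk v - rk u \<Longrightarrow> u' \<in> P \<Longrightarrow> v' \<in> P \<Longrightarrow> lt_on le u' v'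
      \<Longrightarrow> even (rk v' - rk u') \<Longrightarrow> (R u' v' :: 'r) = 0"
    using less.hyps by blast
  define a where "a = rk u"
  define b where "b = rk v"
  define d where "d = b - a"
  have ab: "a < b" using mono[OF u v uv] unfolding a_def b_def by simp
  have d2: "d \<ge> 2" using ab ev unfolding d_def a_def b_def by presburger
  define I where "I = ivl u v"
  define Yo where "Yo = {y\<in>I. odd (rk y - a)}"
  define Ye where "Ye = {y\<in>I. even (rk y - a)}"
  have fI: "finite I" unfolding I_def by (rule finite_ivl)
  have fYo: "finite Yo" "finite Ye" using fI unfolding Yo_def Ye_def by auto
  note ivf = ivl_facts[OF _ u v, folded I_def a_def b_def]
  define G where "G = (\<lambda>z y. (2::'r)^(rk z - Suc a) * R z y * 2^(b - Suc (rk y)))"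
  have dd: "rk v - Suc (rk u) = d - 1" unfolding d_def a_def b_def by simp
  have L: "(R u v :: 'r) = 2^(d-1) + (\<Sum>y\<in>I. R u y * (-1) * 2^(b - Suc (rk y)))"
    using R_last[OF u v] unfolding I_def b_def dd by simp
  have S1: "(\<Sum>y\<in>I. (R u y :: 'r) * (-1) * 2^(b - Suc (rk y))) = (\<Sum>y\<in>Yo. R u y * (-1) * 2^(b - Suc (rk y)))"
  proof (rule sum.mono_neutral_right[OF fI])
    show "Yo \<subseteq> I" unfolding Yo_def by auto
    show "\<forall>y\<in>I - Yo. (R u y :: 'r) * (-1) * 2^(b - Suc (rk y)) = 0"
    proof
      fix y assume y: "y \<in> I - Yo"
      have yy: "y \<in> I" "\<not> odd (rk y - a)" using y unfolding Yo_def by auto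
      have yf: "y \<in> P" "lt_on le u y" "a < rk y" "rk y < b" using ivf[OF yy(1)] by auto
      have "(R u y :: 'r) = 0"
      proof (rule IH)
        show "rk y - rk u < rk v - rk u" using yf unfolding a_def b_def by linarith
        show "even (rk y - rk u)" using yy unfolding a_def by simp
      qed (use u yf in auto)
      then show "(R u y :: 'r) * (-1) * 2^(b - Suc (rk y)) = 0" by simp
    qed
  qed
  have S2: "(R u y :: 'r) * (-1) * 2^(b - Suc (rk y)) = - (2^(d-2)) + (\<Sum>z\<in>ivl u y. G z y)" if y: "y \<in> Yo" for y
  proof -
    have yI: "y \<in> I" using y unfolding Yo_def by auto
    have r: "a < rk y" "rk y < b" using ivf[OF yI] by auto
    have e: "(2::'r)^(rk y - Suc a) * 2^(b - Suc (rk y)) = 2^(d-2)"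
      by (subst power_add[symmetric]) (use r in \<open>simp add: d_def\<close>)
    have h0: "(R u y :: 'r) = 2^(rk y - Suc a) + (\<Sum>z\<in>ivl u y. 2^(rk z - Suc a) * (-1) * R z y)"
      using R_first[OF u, of y] ivf[OF yI] unfolding a_def by simp
    have hG: "(\<Sum>z\<in>ivl u y. G z y) = (\<Sum>z\<in>ivl u y. 2^(rk z - Suc a) * R z y) * 2^(b - Suc (rk y))"
      unfolding G_def by (simp add: sum_distrib_right)
    have hn: "(\<Sum>z\<in>ivl u y. (2::'r)^(rk z - Suc a) * (-1) * R z y) = - (\<Sum>z\<in>ivl u y. 2^(rk z - Suc a) * R z y)"
      by (simp add: sum_negf)
    have h: "(R u y :: 'r) = 2^(rk y - Suc a) - (\<Sum>z\<in>ivl u y. 2^(rk z - Suc a) * R z y)"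
      using h0 unfolding hn by simp
    have "(R u y :: 'r) * (-1) * 2^(b - Suc (rk y)) =
       - (2^(rk y - Suc a) * 2^(b - Suc (rk y))) + (\<Sum>z\<in>ivl u y. G z y)"
      unfolding hG by (subst h) (simp add: algebra_simps)
    then show ?thesis using e by simp
  qed
  have T1: "(\<Sum>z\<in>ivl u y. G z y) = (\<Sum>z\<in>{z\<in>Ye. lt_on le z y}. G z y)" if y: "y \<in> Yo" for y
  proof -
    have yI: "y \<in> I" using y unfolding Yo_def by auto
    have eq: "ivl u y = {z\<in>I. lt_on le z y}" using ivl_sub_left[OF u v] yI unfolding I_def by blast
    show ?thesis unfolding eq
    proof (rule sum.mono_neutral_right)
      show "finite {z\<in>I. lt_on le z y}" using fI by auto
      show "{z\<in>Ye. lt_on le z y} \<subseteq> {z\<in>I. lt_on le z y}" unfolding Ye_def by auto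
      show "\<forall>z\<in>{z\<in>I. lt_on le z y} - {z\<in>Ye. lt_on le z y}. G z y = 0"
      proof
        fix z assume z: "z \<in> {z\<in>I. lt_on le z y} - {z\<in>Ye. lt_on le z y}"
        have zf: "z \<in> P" "a < rk z" "odd (rk z - a)" "lt_on le z y" using z ivf unfolding Ye_def by auto
        have yf: "y \<in> P" "rk y < b" "odd (rk y - a)" using y ivf unfolding Yo_def by auto
        have zy: "rk z < rk y" using mono[OF zf(1) yf(1) zf(4)] .
        have "even (rk y - rk z)" using zf yf zy by presburger
        moreover have "rk y - rk z < rk v - rk u" using zf yf zy unfolding a_def b_def by linarith
        ultimately have "(R z y :: 'r) = 0" using IH[of y z] zf yf by auto
        then show "G z y = 0" unfolding G_def by simp
      qed
    qed
  qed
  have T2: "(\<Sum>y\<in>Yo. \<Sum>z\<in>{z\<in>Ye. lt_on le z y}. G z y) = (\<Sum>z\<in>Ye. \<Sum>y\<in>{y\<in>Yo. lt_on le z y}. G z y)"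
    by (rule sum.swap_restrict[OF fYo])
  have T3: "(\<Sum>y\<in>{y\<in>Yo. lt_on le z y}. G z y) = 2^(d-2)" if z: "z \<in> Ye" for z
  proof -
    have zI: "z \<in> I" using z unfolding Ye_def by auto
    have zf: "z \<in> P" "a < rk z" "rk z < b" "even (rk z - a)" "lt_on le z v" using z ivf unfolding Ye_def by auto
    have eq: "ivl z v = {y\<in>I. lt_on le z y}" using ivl_sub_right[OF u v] zI unfolding I_def by blast
    have s: "(\<Sum>y\<in>{y\<in>Yo. lt_on le z y}. (R z y :: 'r) * 2^(b - Suc (rk y))) = (\<Sum>y\<in>ivl z v. R z y * 2^(b - Suc (rk y)))"
      unfolding eq
    proof (rule sum.mono_neutral_left)
      show "finite {y\<in>I. lt_on le z y}" using fI by auto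
      show "{y\<in>Yo. lt_on le z y} \<subseteq> {y\<in>I. lt_on le z y}" unfolding Yo_def by auto
      show "\<forall>y\<in>{y\<in>I. lt_on le z y} - {y\<in>Yo. lt_on le z y}. (R z y :: 'r) * 2^(b - Suc (rk y)) = 0"
      proof
        fix y assume y: "y \<in> {y\<in>I. lt_on le z y} - {y\<in>Yo. lt_on le z y}"
        have yf: "y \<in> P" "rk y < b" "even (rk y - a)" "lt_on le z y" using y ivf unfolding Yo_def by auto
        have zy: "rk z < rk y" using mono[OF zf(1) yf(1) yf(4)] .
        have "even (rk y - rk z)" using zf yf zy by presburger
        moreover have "rk y - rk z < rk v - rk u" using zf yf zy unfolding a_def b_def by linarith
        ultimately have "(R z y :: 'r) = 0" using IH[of y z] zf yf by auto
        then show "(R z y :: 'r) * 2^(b - Suc (rk y)) = 0" by simp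
      qed
    qed
    have Rzv: "(R z v :: 'r) = 0"
    proof (rule IH)
      show "rk v - rk z < rk v - rk u" using zf unfolding a_def b_def by linarith
      show "even (rk v - rk z)" using zf ev ab unfolding a_def b_def by presburger
    qed (use zf v in auto)
    have "(R z v :: 'r) = 2^(b - Suc (rk z)) + (\<Sum>y\<in>ivl z v. R z y * (-1) * 2^(b - Suc (rk y)))"
      using R_last[OF zf(1) v] unfolding b_def by simp
    then have s2: "(\<Sum>y\<in>ivl z v. (R z y :: 'r) * 2^(b - Suc (rk y))) = 2^(b - Suc (rk z))"
      using Rzv by (simp add: sum_negf)
    have e: "(2::'r)^(rk z - Suc a) * 2^(b - Suc (rk z)) = 2^(d-2)"
      by (subst power_add[symmetric]) (use zf in \<open>simp add: d_def\<close>)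
    have "(\<Sum>y\<in>{y\<in>Yo. lt_on le z y}. G z y) = 2^(rk z - Suc a) * (\<Sum>y\<in>{y\<in>Yo. lt_on le z y}. (R z y :: 'r) * 2^(b - Suc (rk y)))"
      unfolding G_def by (simp add: sum_distrib_left mult.assoc)
    also have "\<dots> = 2^(d-2)" using s s2 e by simp
    finally show ?thesis .
  qed
  have cardE: "card Yo = card Ye + 2"
  proof -
    have c: "card {z\<in>P. le u z \<and> le z v \<and> even (rk z - rk u)} = card {z\<in>P. le u z \<and> le z v \<and> odd (rk z - rk u)}"
      by (rule eul[OF u v uv])
    have e1: "{z\<in>P. le u z \<and> le z v \<and> even (rk z - rk u)} = insert u (insert v Ye)"
    proof
      show "{z\<in>P. le u z \<and> le z v \<and> even (rk z - rk u)} \<subseteq> insert u (insert v Ye)"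
        unfolding Ye_def I_def ivl_def lt_on_def a_def by auto
      show "insert u (insert v Ye) \<subseteq> {z\<in>P. le u z \<and> le z v \<and> even (rk z - rk u)}"
        using u v uv ev reflP[OF u] reflP[OF v] unfolding Ye_def I_def ivl_def lt_on_def a_def by auto
    qed
    have e2: "{z\<in>P. le u z \<and> le z v \<and> odd (rk z - rk u)} = Yo"
    proof
      show "{z\<in>P. le u z \<and> le z v \<and> odd (rk z - rk u)} \<subseteq> Yo"
      proof
        fix z assume z: "z \<in> {z\<in>P. le u z \<and> le z v \<and> odd (rk z - rk u)}"
        have "z \<noteq> u" using z by auto
        moreover have "z \<noteq> v" using z ev by auto
        ultimately show "z \<in> Yo" using z unfolding Yo_def I_def ivl_def lt_on_def a_def by auto
      qed
      show "Yo \<subseteq> {z\<in>P. le u z \<and> le z v \<and> odd (rk z - rk u)}"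
        unfolding Yo_def I_def ivl_def lt_on_def a_def by auto
    qed
    have nu: "u \<notin> Ye" "v \<notin> Ye" "u \<noteq> v" using uv unfolding Ye_def I_def ivl_def lt_on_def by auto
    have "card (insert u (insert v Ye)) = card Ye + 2" using nu fYo by simp
    then show ?thesis using c e1 e2 by simp
  qed
  have "(R u v :: 'r) = 2^(d-1) + (\<Sum>y\<in>Yo. - (2^(d-2)) + (\<Sum>z\<in>ivl u y. G z y))"
    using L S1 S2 by simp
  also have "(\<Sum>y\<in>Yo. - ((2::'r)^(d-2)) + (\<Sum>z\<in>ivl u y. G z y)) = - (of_nat (card Yo) * 2^(d-2)) + (\<Sum>y\<in>Yo. \<Sum>z\<in>{z\<in>Ye. lt_on le z y}. G z y)"
    using T1 by (simp add: sum.distrib sum_subtractf)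
  also have "(\<Sum>y\<in>Yo. \<Sum>z\<in>{z\<in>Ye. lt_on le z y}. G z y) = of_nat (card Ye) * 2^(d-2)"
    using T2 T3 by simp
  also have "(2::'r)^(d-1) = 2 * 2^(d-2)"
  proof -
    obtain k where "d = Suc (Suc k)" using d2 by (metis add_2_eq_Suc le_Suc_ex)
    then show ?thesis by simp
  qed
  finally show ?case using cardE by (simp add: algebra_simps)
qed

end

definition ee :: "nat \<Rightarrow> int poly" where "ee i = 1 - [:0,1:]^i"
definition gg :: "nat \<Rightarrow> int poly" where "gg i = 1 + [:0,1:]^i"

lemma dvd_ee: "even i \<Longrightarrow> [:1,1:] dvd ee i"
proof -
  assume "even i"
  then have "poly (ee i) (-1) = 0" unfolding ee_def by (simp add: poly_power)
  then have "[:- (-1), 1:] dvd ee i" using poly_eq_0_iff_dvd by blast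
  then show ?thesis by simp
qed

lemma dvd_gg: "odd i \<Longrightarrow> [:1,1:] dvd gg i"
proof -
  assume "odd i"
  then have "poly (gg i) (-1) = 0" unfolding gg_def by (simp add: poly_power)
  then have "[:- (-1), 1:] dvd gg i" using poly_eq_0_iff_dvd by blast
  then show ?thesis by simp
qed

lemma dvd_gg': "[:1,1:] ^ (if odd i then 1 else 0) dvd gg i"
  using dvd_gg by auto

lemma prod_ee_dvd: "[:1,1:]^((b+1) div 2 - (a div 2 + 1)) dvd (\<Prod>i\<in>{a<..<b}. ee i)"
proof (induction b)
  case 0
  then show ?case by simp
next
  case (Suc b)
  show ?case
  proof (cases "a < b")
    case True
    have s: "{a<..<Suc b} = insert b {a<..<b}" using True by auto
    have p: "(\<Prod>i\<in>{a<..<Suc b}. ee i) = ee b * (\<Prod>i\<in>{a<..<b}. ee i)"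
      unfolding s by simp
    show ?thesis
    proof (cases "even b")
      case True
      have ex: "(Suc b + 1) div 2 - (a div 2 + 1) = Suc ((b + 1) div 2 - (a div 2 + 1))"
        using True \<open>a < b\<close> by (rule ar1)
      show ?thesis unfolding p ex power_Suc
        by (rule mult_dvd_mono[OF dvd_ee[OF True] Suc.IH])
    next
      case False
      have ex: "(Suc b + 1) div 2 - (a div 2 + 1) = (b + 1) div 2 - (a div 2 + 1)"
        using False by (intro ar2) simp
      show ?thesis unfolding p ex
        using Suc.IH by (rule dvd_mult)
    qed
  next
    case False
    have ex: "(Suc b + 1) div 2 - (a div 2 + 1) = 0" using False by (rule ar3)
    show ?thesis unfolding ex by simp
  qed
qed

context gpe begin

definition Phi :: "'a \<Rightarrow> 'a \<Rightarrow> int poly" where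
  "Phi u v = CS (\<lambda>i. gg i + ee i * (-1)) (\<lambda>i. ee i * 2) u v"
definition Ev :: "'a \<Rightarrow> 'a \<Rightarrow> int poly" where
  "Ev u v = CS (\<lambda>i. ee i * (-1)) (\<lambda>i. ee i * 2) u v"
definition Pg :: "'a \<Rightarrow> 'a \<Rightarrow> int poly" where
  "Pg u v = (\<Prod>i\<in>{rk u<..<rk v}. ee i * 2)"

lemma Phi_rec: "u \<in> P \<Longrightarrow> v \<in> P \<Longrightarrow> lt_on le u v \<Longrightarrow>
   Phi u v = Pg u v + star (\<lambda>z. gg (rk z) + ee (rk z) * (-1)) Pg Phi u v"
  unfolding Phi_def Pg_def star_def by (rule CS_first)

lemma Ev_rec: "u \<in> P \<Longrightarrow> v \<in> P \<Longrightarrow> lt_on le u v \<Longrightarrow>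
   Ev u v = Pg u v + star (\<lambda>z. ee (rk z) * (-1)) Pg Ev u v"
  unfolding Ev_def Pg_def star_def by (rule CS_first)

lemma Phi_cd: "u \<in> P \<Longrightarrow> v \<in> P \<Longrightarrow> lt_on le u v \<Longrightarrow>
   Phi u v = Ev u v + star (\<lambda>z. gg (rk z)) Ev Phi u v"
  by (rule cd_identity[of Phi Pg "\<lambda>z. gg (rk z)" "\<lambda>z. ee (rk z) * (-1)" Ev, OF Phi_rec Ev_rec])

lemma Ev_R: "Ev u v = (\<Prod>i\<in>{rk u<..<rk v}. ee i) * R u v"
  unfolding Ev_def R_def by (rule CS_scale)

lemma Ev_dvd:
  assumes u: "u \<in> P" and v: "v \<in> P" and uv: "lt_on le u v"
  shows "[:1,1:]^(rk v div 2 - (rk u + 1) div 2) dvd Ev u v"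
proof (cases "even (rk v - rk u)")
  case True
  then have "(R u v :: int poly) = 0" using R_zero[OF u v uv] by simp
  then show ?thesis unfolding Ev_R by simp
next
  case False
  have ab: "rk u < rk v" using mono[OF u v uv] .
  have ex: "rk v div 2 - (rk u + 1) div 2 = (rk v + 1) div 2 - (rk u div 2 + 1)"
    using False ab by (rule ar4)
  show ?thesis unfolding Ev_R ex by (rule dvd_mult2[OF prod_ee_dvd])
qed

lemma Phi_dvd:
  "u \<in> P \<Longrightarrow> v \<in> P \<Longrightarrow> lt_on le u v \<Longrightarrow> [:1,1:]^(rk v div 2 - (rk u + 1) div 2) dvd Phi u v"
proof (induction "rk v - rk u" arbitrary: u rule: less_induct)
  case less
  note u = less.prems(1) and v = less.prems(2) and uv = less.prems(3)
  have "[:1,1:]^(rk v div 2 - (rk u + 1) div 2) dvd star (\<lambda>z. gg (rk z)) Ev Phi u v"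
    unfolding star_def
  proof (rule dvd_sum)
    fix z assume z: "z \<in> ivl u v"
    have zf: "z \<in> P" "lt_on le u z" "lt_on le z v" "rk u < rk z" "rk z < rk v"
      using ivl_facts[OF z u v] by auto
    have ih: "[:1,1:]^(rk v div 2 - (rk z + 1) div 2) dvd Phi z v"
      using less.hyps[of z] zf v by simp
    have ex: "rk v div 2 - (rk u + 1) div 2 = (rk z div 2 - (rk u + 1) div 2)
        + (if odd (rk z) then 1 else 0) + (rk v div 2 - (rk z + 1) div 2)"
      using zf(4,5) by (rule ar5)
    show "[:1,1:]^(rk v div 2 - (rk u + 1) div 2) dvd Ev u z * gg (rk z) * Phi z v"
      unfolding ex power_add
      by (intro mult_dvd_mono Ev_dvd[OF u zf(1) zf(2)] dvd_gg' ih)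
  qed
  moreover have "[:1,1:]^(rk v div 2 - (rk u + 1) div 2) dvd Ev u v" by (rule Ev_dvd[OF u v uv])
  ultimately show ?case using Phi_cd[OF u v uv] by simp
qed

end

section \<open>Rank monotonicity\<close>

lemma graded_mono:
  assumes g: "graded_poset P le z0 z1 rk"
  shows "x \<in> P \<Longrightarrow> y \<in> P \<Longrightarrow> lt_on le x y \<Longrightarrow> rk x < rk y"
proof (induction "card {w\<in>P. lt_on le x w \<and> le w y}" arbitrary: x y rule: less_induct)
  case less
  have finP: "finite P" and refl: "\<And>x. x\<in>P \<Longrightarrow> le x x"
    and anti: "\<And>x y. x\<in>P \<Longrightarrow> y\<in>P \<Longrightarrow> le x y \<Longrightarrow> le y x \<Longrightarrow> x = y"
    and tr: "\<And>x y z. x\<in>P \<Longrightarrow> y\<in>P \<Longrightarrow> z\<in>P \<Longrightarrow> le x y \<Longrightarrow> le y z \<Longrightarrow> le x z"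
    and cov: "\<And>x y. covers_on P le x y \<Longrightarrow> rk y = rk x + 1"
    using g unfolding graded_poset_def by blast+
  note x = less.prems(1) and y = less.prems(2) and xy = less.prems(3)
  show ?case
  proof (cases "\<exists>w\<in>P. lt_on le x w \<and> lt_on le w y")
    case False
    then have "covers_on P le x y" using x y xy unfolding covers_on_def by blast
    then show ?thesis using cov by simp
  next
    case True
    then obtain w where w: "w \<in> P" "lt_on le x w" "lt_on le w y" by blast
    have fin: "finite {w\<in>P. lt_on le x w \<and> le w y}" using finP by simp
    have c1: "card {w'\<in>P. lt_on le x w' \<and> le w' w} < card {w\<in>P. lt_on le x w \<and> le w y}"
    proof (rule psubset_card_mono[OF fin])
      show "{w'\<in>P. lt_on le x w' \<and> le w' w} \<subset> {w\<in>P. lt_on le x w \<and> le w y}"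
      proof
        show "{w'\<in>P. lt_on le x w' \<and> le w' w} \<subseteq> {w\<in>P. lt_on le x w \<and> le w y}"
          using w tr y unfolding lt_on_def by blast
        have "y \<notin> {w'\<in>P. lt_on le x w' \<and> le w' w}" using w anti y unfolding lt_on_def by blast
        moreover have "y \<in> {w\<in>P. lt_on le x w \<and> le w y}" using xy y refl by blast
        ultimately show "{w'\<in>P. lt_on le x w' \<and> le w' w} \<noteq> {w\<in>P. lt_on le x w \<and> le w y}" by blast
      qed
    qed
    have c2: "card {w'\<in>P. lt_on le w w' \<and> le w' y} < card {w\<in>P. lt_on le x w \<and> le w y}"
    proof (rule psubset_card_mono[OF fin])
      show "{w'\<in>P. lt_on le w w' \<and> le w' y} \<subset> {w\<in>P. lt_on le x w \<and> le w y}"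
      proof
        show "{w'\<in>P. lt_on le w w' \<and> le w' y} \<subseteq> {w\<in>P. lt_on le x w \<and> le w y}"
          using w tr x anti unfolding lt_on_def by blast
        have "w \<notin> {w'\<in>P. lt_on le w w' \<and> le w' y}" unfolding lt_on_def by blast
        moreover have "w \<in> {w\<in>P. lt_on le x w \<and> le w y}" using w unfolding lt_on_def by blast
        ultimately show "{w'\<in>P. lt_on le w w' \<and> le w' y} \<noteq> {w\<in>P. lt_on le x w \<and> le w y}" by blast
      qed
    qed
    have "rk x < rk w" using less.hyps[OF c1 x w(1) w(2)] .
    moreover have "rk w < rk y" using less.hyps[OF c2 w(1) y w(3)] .
    ultimately show ?thesis by simp
  qed
qed

lemma eulerian_gpe:
  assumes "eulerian P le z0 z1 rk"
  shows "gpe P le rk"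
proof -
  have g: "graded_poset P le z0 z1 rk" using assms unfolding eulerian_def by blast
  show ?thesis
  proof (unfold_locales)
    show "finite P" using g unfolding graded_poset_def by blast
  next
    fix x assume "x \<in> P" then show "le x x" using g unfolding graded_poset_def by blast
  next
    fix x y assume "x \<in> P" "y \<in> P" "le x y" "le y x" then show "x = y"
      using g unfolding graded_poset_def by blast
  next
    fix x y z assume "x \<in> P" "y \<in> P" "z \<in> P" "le x y" "le y z" then show "le x z"
      using g unfolding graded_poset_def by blast
  next
    fix x y assume "x \<in> P" "y \<in> P" "lt_on le x y" then show "rk x < rk y"
      using graded_mono[OF g] by blast
  next
    fix u v assume "u \<in> P" "v \<in> P" "lt_on le u v"
    then show "card {z\<in>P. le u z \<and> le z v \<and> even (rk z - rk u)} = card {z\<in>P. le u z \<and> le z v \<and> odd (rk z - rk u)}"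
      using assms unfolding eulerian_def by blast
  qed
qed

section \<open>The v-words\<close>

definition lf :: "nat set \<Rightarrow> nat \<Rightarrow> ncpoly" where
  "lf S i = (if i \<in> S then nc_b else (\<lambda>w. nc_a w - nc_b w))"

definition lv :: "nat set \<Rightarrow> nat \<Rightarrow> bool \<Rightarrow> int" where
  "lv S i x = (if x then (if i \<in> S then 1 else -1) else (if i \<in> S then 0 else 1))"

lemma lf_val: "lf S i w = (if length w = 1 then lv S i (hd w) else 0)"
proof (cases w)
  case Nil then show ?thesis by (simp add: lf_def lv_def nc_a_def nc_b_def)
next
  case (Cons x xs)
  then show ?thesis by (cases xs; cases x) (auto simp: lf_def lv_def nc_a_def nc_b_def)
qed

lemma nc_mult_letter:
  assumes f: "\<And>w. length w \<noteq> 1 \<Longrightarrow> f w = 0"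
  shows "nc_mult f g w = (case w of [] \<Rightarrow> 0 | x # w' \<Rightarrow> f [x] * g w')"
proof (cases w)
  case Nil
  then show ?thesis using f[of "[]"] by (simp add: nc_mult_def)
next
  case (Cons x w')
  have "nc_mult f g w = (\<Sum>k\<le>length w. f (take k w) * g (drop k w))" by (simp add: nc_mult_def)
  also have "\<dots> = f (take 1 w) * g (drop 1 w) + (\<Sum>k\<in>{..length w} - {1}. f (take k w) * g (drop k w))"
    by (rule sum.remove) (use Cons in auto)
  also have "(\<Sum>k\<in>{..length w} - {1}. f (take k w) * g (drop k w)) = 0"
  proof (rule sum.neutral, rule ballI)
    fix k assume k: "k \<in> {..length w} - {1}"
    then have "length (take k w) \<noteq> 1" using Cons by auto
    then show "f (take k w) * g (drop k w) = 0" using f by simp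
  qed
  finally show ?thesis using Cons by simp
qed

lemma foldr_formula:
  "foldr nc_mult (map (lf S) xs) nc_one w =
     (if length w = length xs then (\<Prod>j<length xs. lv S (xs!j) (w!j)) else 0)"
proof (induction xs arbitrary: w)
  case Nil
  then show ?case by (simp add: nc_one_def)
next
  case (Cons x xs)
  have "foldr nc_mult (map (lf S) (x # xs)) nc_one w = nc_mult (lf S x) (foldr nc_mult (map (lf S) xs) nc_one) w"
    by simp
  also have "\<dots> = (case w of [] \<Rightarrow> 0 | y # w' \<Rightarrow> lf S x [y] * foldr nc_mult (map (lf S) xs) nc_one w')"
    by (rule nc_mult_letter) (simp add: lf_val)
  also have "\<dots> = (if length w = length (x # xs) then (\<Prod>j<length (x#xs). lv S ((x#xs)!j) (w!j)) else 0)"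
  proof (cases w)
    case Nil then show ?thesis by simp
  next
    case (Cons y w')
    have l: "lf S x [y] = lv S x y" by (simp add: lf_val)
    show ?thesis unfolding Cons using Cons.IH[of w'] l
      by (simp add: prod.lessThan_Suc_shift del: prod.lessThan_Suc)
  qed
  finally show ?case .
qed

lemma v_word_formula:
  "v_word n S w = (if length w = n then (\<Prod>j<n. lv S (Suc j) (w!j)) else 0)"
proof -
  have "v_word n S w = foldr nc_mult (map (lf S) [1..<n+1]) nc_one w"
    unfolding v_word_def lf_def by (simp add: comp_def)
  also have "\<dots> = (if length w = n then (\<Prod>j<n. lv S ([1..<n+1]!j) (w!j)) else 0)"
    by (simp only: foldr_formula length_upt add_diff_cancel_right')
  also have "\<dots> = (if length w = n then (\<Prod>j<n. lv S (Suc j) (w!j)) else 0)"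
  proof -
    have "(\<Prod>j<n. lv S ([1..<n+1]!j) (w!j)) = (\<Prod>j<n. lv S (Suc j) (w!j))"
    proof (rule prod.cong[OF refl])
      fix j assume "j \<in> {..<n}"
      then have "[1..<n+1]!j = Suc j" by (subst nth_upt) auto
      then show "lv S ([1..<n+1]!j) (w!j) = lv S (Suc j) (w!j)" by simp
    qed
    then show ?thesis by simp
  qed
  finally show ?thesis .
qed


lemma word_sum:
  fixes h :: "nat \<Rightarrow> bool \<Rightarrow> 'r::comm_semiring_1"
  shows "(\<Sum>w\<in>{w::bool list. length w = n}. \<Prod>j<n. h j (w!j)) = (\<Prod>j<n. h j False + h j True)"
proof (induction n arbitrary: h)
  case 0
  have "{w::bool list. length w = 0} = {[]}" by auto
  then show ?case by simp
next
  case (Suc n)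
  have e: "{w::bool list. length w = Suc n} = (\<lambda>p. fst p # snd p) ` (UNIV \<times> {w. length w = n})"
  proof
    show "{w::bool list. length w = Suc n} \<subseteq> (\<lambda>p. fst p # snd p) ` (UNIV \<times> {w. length w = n})"
    proof
      fix w :: "bool list" assume "w \<in> {w. length w = Suc n}"
      then obtain x w' where "w = x # w'" "length w' = n" by (cases w) auto
      then show "w \<in> (\<lambda>p. fst p # snd p) ` (UNIV \<times> {w. length w = n})"
        by (intro image_eqI[of _ _ "(x, w')"]) auto
    qed
  qed auto
  have inj: "inj_on (\<lambda>p. fst p # snd p) (UNIV \<times> {w::bool list. length w = n})"
    by (rule inj_onI) (auto simp: prod_eq_iff)
  have fin: "finite {w::bool list. length w = n}"
    using finite_lists_length_eq[of "UNIV :: bool set" n] by simp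
  have "(\<Sum>w\<in>{w::bool list. length w = Suc n}. \<Prod>j<Suc n. h j (w!j))
      = (\<Sum>p\<in>UNIV \<times> {w::bool list. length w = n}. \<Prod>j<Suc n. h j ((fst p # snd p)!j))"
    unfolding e by (subst sum.reindex[OF inj]) (simp add: comp_def)
  also have "\<dots> = (\<Sum>x\<in>UNIV. \<Sum>w\<in>{w::bool list. length w = n}. \<Prod>j<Suc n. h j ((x # w)!j))"
    by (subst sum.cartesian_product) (simp add: split_def)
  also have "\<dots> = (\<Sum>x\<in>UNIV. h 0 x * (\<Sum>w\<in>{w::bool list. length w = n}. \<Prod>j<n. h (Suc j) (w!j)))"
    by (simp add: prod.lessThan_Suc_shift sum_distrib_left del: prod.lessThan_Suc)
  also have "\<dots> = (\<Sum>x\<in>UNIV. h 0 x * (\<Prod>j<n. h (Suc j) False + h (Suc j) True))"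
    using Suc.IH[of "\<lambda>j. h (Suc j)"] by simp
  also have "\<dots> = (h 0 False + h 0 True) * (\<Prod>j<n. h (Suc j) False + h (Suc j) True)"
    by (simp add: UNIV_bool algebra_simps)
  also have "\<dots> = (\<Prod>j<Suc n. h j False + h j True)"
    by (simp add: prod.lessThan_Suc_shift del: prod.lessThan_Suc)
  finally show ?case .
qed

definition qp :: "nat \<Rightarrow> int poly" where "qp k = [:0,1:]^k"

lemma smult_sum_right: "smult c (\<Sum>i\<in>A. f i) = (\<Sum>i\<in>A. smult c (f i))"
  by (induction A rule: infinite_finite_induct) (simp_all add: smult_add_right)

lemma smult_prod_lessThan:
  "smult (\<Prod>j<(n::nat). c j) (\<Prod>j<n. p j) = (\<Prod>j<n. smult (c j) (p j))"
proof (induction n)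
  case 0 then show ?case by simp
next
  case (Suc n)
  have "smult (prod c {..<n} * c n) (prod p {..<n} * p n) = smult (c n) (smult (prod c {..<n}) (prod p {..<n}) * p n)"
    by (simp add: mult.commute)
  then show ?case using Suc.IH by simp
qed

definition WtS :: "nat \<Rightarrow> nat set \<Rightarrow> int poly" where
  "WtS n S = (\<Prod>i\<in>{0<..<Suc n}. if i \<in> S then qp i else 1 - qp i)"

lemma prod_shift1: "(\<Prod>i\<in>{0<..<Suc n}. g i) = (\<Prod>j<n. g (Suc j))"
proof -
  have "{0<..<Suc n} = {Suc 0..n}" by auto
  then show ?thesis by (simp add: prod.atLeast1_atMost_eq)
qed

lemma Theta_sum:
  assumes supp: "\<And>w. F w \<noteq> 0 \<Longrightarrow> length w = n"
  shows "Theta F = (\<Sum>w\<in>{w. length w = n}. smult (F w) (\<Prod>j<n. if w!j then qp (j+1) else 1))"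
proof -
  have fin: "finite {w::bool list. length w = n}"
    using finite_lists_length_eq[of "UNIV :: bool set" n] by simp
  have "Theta F = (\<Sum>w\<in>{w. F w \<noteq> 0}. smult (F w) (\<Prod>i\<in>{i. i < length w \<and> w ! i}. [:0, 1:] ^ (i + 1)))"
    unfolding Theta_def ..
  also have "\<dots> = (\<Sum>w\<in>{w. length w = n}. smult (F w) (\<Prod>i\<in>{i. i < length w \<and> w ! i}. [:0, 1:] ^ (i + 1)))"
    by (rule sum.mono_neutral_left[OF fin]) (use supp in auto)
  also have "\<dots> = (\<Sum>w\<in>{w. length w = n}. smult (F w) (\<Prod>j<n. if w!j then qp (j+1) else 1))"
  proof (rule sum.cong[OF refl])
    fix w :: "bool list" assume "w \<in> {w. length w = n}"
    then have l: "length w = n" by simp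
    have se: "{i. i < length w \<and> w ! i} = {i\<in>{..<n}. w!i}" using l by auto
    have "(\<Prod>i\<in>{i. i < length w \<and> w ! i}. [:0, 1:] ^ (i + 1)) = (\<Prod>j<n. if w!j then qp (j+1) else 1)"
      unfolding se qp_def by (rule prod.inter_filter[OF finite_lessThan])
    then show "smult (F w) (\<Prod>i\<in>{i. i < length w \<and> w ! i}. [:0, 1:] ^ (i + 1)) =
        smult (F w) (\<Prod>j<n. if w!j then qp (j+1) else 1)" by simp
  qed
  finally show ?thesis .
qed

lemma Theta_v_word:
  "(\<Sum>w\<in>{w. length w = n}. smult (v_word n S w) (\<Prod>j<n. if w!j then qp (j+1) else 1)) = WtS n S"
proof -
  define h where "h = (\<lambda>j x. smult (lv S (Suc j) x) (if x then qp (j+1) else (1::int poly)))"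
  have "(\<Sum>w\<in>{w. length w = n}. smult (v_word n S w) (\<Prod>j<n. if w!j then qp (j+1) else 1))
      = (\<Sum>w\<in>{w. length w = n}. \<Prod>j<n. h j (w!j))"
    by (rule sum.cong[OF refl]) (simp add: v_word_formula smult_prod_lessThan h_def)
  also have "\<dots> = (\<Prod>j<n. h j False + h j True)" by (rule word_sum)
  also have "\<dots> = (\<Prod>j<n. if Suc j \<in> S then qp (Suc j) else 1 - qp (Suc j))"
    by (rule prod.cong[OF refl]) (simp add: h_def lv_def)
  also have "\<dots> = WtS n S" unfolding WtS_def prod_shift1 ..
  finally show ?thesis .
qed

lemma Theta_ab:
  "Theta (ab_index P le z0 z1 rk n) = (\<Sum>S\<in>Pow {1..n}. smult (int (flag_f P le z0 z1 rk S)) (WtS n S))"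
proof -
  have supp: "length w = n" if "ab_index P le z0 z1 rk n w \<noteq> 0" for w
  proof (rule ccontr)
    assume "length w \<noteq> n"
    then have "ab_index P le z0 z1 rk n w = 0" unfolding ab_index_def by (simp add: v_word_formula)
    then show False using that by simp
  qed
  have t: "Theta (ab_index P le z0 z1 rk n) = (\<Sum>w\<in>{w. length w = n}.
      smult (ab_index P le z0 z1 rk n w) (\<Prod>j<n. if w!j then qp (j+1) else 1))"
    by (rule Theta_sum) (rule supp)
  have "Theta (ab_index P le z0 z1 rk n) = (\<Sum>w\<in>{w. length w = n}.
      smult (\<Sum>S\<in>Pow {1..n}. int (flag_f P le z0 z1 rk S) * v_word n S w) (\<Prod>j<n. if w!j then qp (j+1) else 1))"
    unfolding t by (simp only: ab_index_def)
  also have "\<dots> = (\<Sum>w\<in>{w. length w = n}. \<Sum>S\<in>Pow {1..n}.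
      smult (int (flag_f P le z0 z1 rk S)) (smult (v_word n S w) (\<Prod>j<n. if w!j then qp (j+1) else 1)))"
    by (simp add: smult_sum)
  also have "\<dots> = (\<Sum>S\<in>Pow {1..n}. \<Sum>w\<in>{w. length w = n}.
      smult (int (flag_f P le z0 z1 rk S)) (smult (v_word n S w) (\<Prod>j<n. if w!j then qp (j+1) else 1)))"
    by (rule sum.swap)
  also have "\<dots> = (\<Sum>S\<in>Pow {1..n}. smult (int (flag_f P le z0 z1 rk S)) (\<Sum>w\<in>{w. length w = n}.
      smult (v_word n S w) (\<Prod>j<n. if w!j then qp (j+1) else 1)))"
    by (simp add: smult_sum_right)
  also have "\<dots> = (\<Sum>S\<in>Pow {1..n}. smult (int (flag_f P le z0 z1 rk S)) (WtS n S))"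
    by (simp add: Theta_v_word)
  finally show ?thesis .
qed


lemma cancel2:
  "[:1,1:]^k dvd (2::int poly)^m * F \<Longrightarrow> [:1,1:]^k dvd F"
proof (induction k arbitrary: F)
  case 0 then show ?case by simp
next
  case (Suc k)
  have "[:1,1:] dvd (2::int poly)^m * F" using Suc.prems by (meson dvd_power dvd_trans zero_less_Suc)
  then have "[:- (-1), 1:] dvd (2::int poly)^m * F" by simp
  then have "poly ((2::int poly)^m * F) (-1) = 0" using poly_eq_0_iff_dvd by blast
  then have "poly F (-1) = 0" by (simp add: poly_power)
  then have "[:- (-1), 1:] dvd F" using poly_eq_0_iff_dvd by blast
  then obtain G where G: "F = [:1,1:] * G" by (auto elim: dvdE)
  have e: "(2::int poly)^m * ([:1,1:] * G) = [:1,1:] * (2^m * G)" by (rule mult.left_commute)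
  have "[:1,1:] * [:1,1:]^k dvd [:1,1:] * ((2::int poly)^m * G)"
    using Suc.prems unfolding G e power_Suc .
  then have "[:1,1:]^k dvd (2::int poly)^m * G" by (subst (asm) dvd_mult_cancel_left) simp
  then have "[:1,1:]^k dvd G" by (rule Suc.IH)
  then have "[:1,1:] * [:1,1:]^k dvd [:1,1:] * G" by (rule mult_dvd_mono[OF dvd_refl])
  then show ?case unfolding G power_Suc .
qed

lemma ceil_half: "nat \<lceil>real n / 2\<rceil> = (n + 1) div 2"
proof (cases "even n")
  case True
  then obtain k where n: "n = 2 * k" by (auto elim: evenE)
  have "real n / 2 = real k" unfolding n by simp
  then show ?thesis unfolding n by simp
next
  case False
  then obtain k where n: "n = 2 * k + 1" by (auto elim: oddE)
  have "\<lceil>real n / 2\<rceil> = int k + 1"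
    by (rule ceiling_unique) (simp_all add: n)
  moreover have "(n + 1) div 2 = k + 1" unfolding n by simp
  ultimately show ?thesis by simp
qed

lemma smult_card: "smult (int (card X)) p = (\<Sum>x\<in>X. p)"
  by (simp add: of_nat_poly)

context gpe begin

lemma chain_inj:
  assumes "C \<subseteq> P" "\<forall>x\<in>C. \<forall>y\<in>C. le x y \<or> le y x"
  shows "inj_on rk C"
proof (rule inj_onI)
  fix x y assume xy: "x \<in> C" "y \<in> C" "rk x = rk y"
  show "x = y"
  proof (rule ccontr)
    assume ne: "x \<noteq> y"
    have "lt_on le x y \<or> lt_on le y x" using assms xy ne unfolding lt_on_def by blast
    then show False using mono assms xy by fastforce
  qed
qed

lemma sum_flag:
  assumes z0: "z0 \<in> P" and z1: "z1 \<in> P" and bd: "\<forall>x\<in>P. le z0 x \<and> le x z1"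
    and r0: "rk z0 = 0" and r1: "rk z1 = Suc n"
  shows "(\<Sum>S\<in>Pow {1..n}. smult (int (flag_f P le z0 z1 rk S)) (WtS n S)) = (\<Sum>C\<in>chs z0 z1. WtS n (rk ` C))"
proof -
  have iv: "ivl z0 z1 = P - {z0, z1}" using bd unfolding ivl_def lt_on_def by auto
  have fl: "flag_f P le z0 z1 rk S = card {C\<in>chs z0 z1. rk ` C = S}" for S
  proof -
    have "{C. C \<subseteq> P - {z0, z1} \<and> (\<forall>x\<in>C. \<forall>y\<in>C. le x y \<or> le y x) \<and> bij_betw rk C S}
        = {C\<in>chs z0 z1. rk ` C = S}"
      unfolding chs_def iv bij_betw_def using chain_inj by blast
    then show ?thesis unfolding flag_f_def by simp
  qed
  have sub: "rk ` C \<in> Pow {1..n}" if C: "C \<in> chs z0 z1" for C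
  proof -
    have "\<And>x. x \<in> C \<Longrightarrow> rk z0 < rk x \<and> rk x < rk z1"
      using C ivl_rk[OF _ z0 z1] unfolding chs_def by blast
    then show ?thesis using r0 r1 by fastforce
  qed
  have "(\<Sum>S\<in>Pow {1..n}. smult (int (flag_f P le z0 z1 rk S)) (WtS n S))
      = (\<Sum>S\<in>Pow {1..n}. \<Sum>C\<in>{C\<in>chs z0 z1. rk ` C = S}. WtS n (rk ` C))"
    unfolding fl smult_card by (rule sum.cong[OF refl], rule sum.cong) auto
  also have "\<dots> = (\<Sum>C\<in>chs z0 z1. WtS n (rk ` C))"
    by (rule sum.group) (use sub finite_chs in auto)
  finally show ?thesis .
qed

lemma Phi_top:
  assumes r0: "rk z0 = 0" and r1: "rk z1 = Suc n"
  shows "Phi z0 z1 = 2^n * (\<Sum>C\<in>chs z0 z1. WtS n (rk ` C))"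
proof -
  have pt: "(if i \<in> A then gg i + ee i * (-1) else ee i * 2) = 2 * (if i \<in> A then qp i else 1 - qp i)" for i A
    by (simp add: gg_def ee_def qp_def algebra_simps)
  have "Phi z0 z1 = (\<Sum>C\<in>chs z0 z1. \<Prod>i\<in>{0<..<Suc n}. 2 * (if i \<in> rk ` C then qp i else 1 - qp i))"
    unfolding Phi_def CS_def wt_def r0 r1 pt ..
  also have "\<dots> = (\<Sum>C\<in>chs z0 z1. 2^n * WtS n (rk ` C))"
    unfolding WtS_def by (simp add: prod.distrib prod_constant)
  also have "\<dots> = 2^n * (\<Sum>C\<in>chs z0 z1. WtS n (rk ` C))" by (simp add: sum_distrib_left)
  finally show ?thesis .
qed

end

theorem mainTheorem5:
  fixes P :: "'a set" and le :: "'a \<Rightarrow> 'a \<Rightarrow> bool" and z0 z1 :: 'a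
    and rk :: "'a \<Rightarrow> nat" and n :: nat
  assumes "eulerian P le z0 z1 rk"
    and "rk z1 = n + 1"
  shows "([:1, 1:] :: int poly) ^ nat \<lceil>real n / 2\<rceil> dvd Theta (ab_index P le z0 z1 rk n)"
proof -
  interpret gpe P le rk by (rule eulerian_gpe[OF assms(1)])
  have g: "graded_poset P le z0 z1 rk" using assms(1) unfolding eulerian_def by blast
  have z0: "z0 \<in> P" and z1: "z1 \<in> P" and bd: "\<forall>x\<in>P. le z0 x \<and> le x z1" and r0: "rk z0 = 0"
    using g unfolding graded_poset_def by blast+
  have r1: "rk z1 = Suc n" using assms(2) by simp
  have lt: "lt_on le z0 z1" using bd z1 r0 r1 unfolding lt_on_def by auto
  have "[:1,1:]^(rk z1 div 2 - (rk z0 + 1) div 2) dvd Phi z0 z1" by (rule Phi_dvd[OF z0 z1 lt])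
  then have "[:1,1:]^((n + 1) div 2) dvd Phi z0 z1" using r0 r1 by simp
  moreover have "Phi z0 z1 = 2^n * Theta (ab_index P le z0 z1 rk n)"
    unfolding Phi_top[OF r0 r1] Theta_ab sum_flag[OF z0 z1 bd r0 r1] ..
  ultimately have "[:1,1:]^((n + 1) div 2) dvd Theta (ab_index P le z0 z1 rk n)"
    using cancel2 by metis
  then show ?thesis unfolding ceil_half .
qed


end
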